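(* Let $R$ be a ring and $n\ge 1$ an integer, and let $R_n$ be the subring of $n\times n$ upper triangular matrices over $R$ whose diagonal entries are all equal, i.e. matrices $(a_{ij})$ with $a_{ij}=0$ for $i>j$, $a_{11}=a_{22}=\dots=a_{nn}$, and arbitrary $a_{ij}\in R$ for $i<j$. Then $R$ is NJ-symmetric if and only if $R_n$ is NJ-symmetric.
   Context: Rings are associative with identity. $N(S)$ is the set of nilpotent elements, $J(S)$ the Jacobson radical of a ring $S$. $S$ is NJ-symmetric if for all $a,b,c\in S$, $abc\in N(S)$ implies $bac\in J(S)$. *)

theory Defs
  imports "HOL-Algebra.Algebra"
begin

definition nilpotents :: "('a, 'b) ring_scheme \<Rightarrow> 'a set" where
  "nilpotents S = {a \<in> carrier S. \<exists>k::nat. a [^]\<^bsub>S\<^esub> k = \<zero>\<^bsub>S\<^esub>}"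

definition left_ideal :: "'a set \<Rightarrow> ('a, 'b) ring_scheme \<Rightarrow> bool" where
  "left_ideal I S \<longleftrightarrow> additive_subgroup I S \<and>
     (\<forall>x\<in>carrier S. \<forall>a\<in>I. x \<otimes>\<^bsub>S\<^esub> a \<in> I)"

definition maximal_left_ideal :: "'a set \<Rightarrow> ('a, 'b) ring_scheme \<Rightarrow> bool" where
  "maximal_left_ideal I S \<longleftrightarrow> left_ideal I S \<and> I \<noteq> carrier S \<and>
     (\<forall>J. left_ideal J S \<and> I \<subseteq> J \<longrightarrow> J = I \<or> J = carrier S)"

text \<open>Jacobson radical J(S): intersection of all maximal left ideals
  (equal to the whole ring if there are none, i.e. for the zero ring).\<close>
definition jacobson_radical :: "('a, 'b) ring_scheme \<Rightarrow> 'a set" where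
  "jacobson_radical S = carrier S \<inter> \<Inter> {I. maximal_left_ideal I S}"

definition NJ_symmetric :: "('a, 'b) ring_scheme \<Rightarrow> bool" where
  "NJ_symmetric S \<longleftrightarrow> (\<forall>a\<in>carrier S. \<forall>b\<in>carrier S. \<forall>c\<in>carrier S.
     a \<otimes>\<^bsub>S\<^esub> b \<otimes>\<^bsub>S\<^esub> c \<in> nilpotents S \<longrightarrow>
     b \<otimes>\<^bsub>S\<^esub> a \<otimes>\<^bsub>S\<^esub> c \<in> jacobson_radical S)"

text \<open>Matrices are functions nat => nat => 'a, indices 0..n-1,
  with entries outside the n x n block fixed to zero.\<close>
definition Rn :: "('a, 'b) ring_scheme \<Rightarrow> nat \<Rightarrow> (nat \<Rightarrow> nat \<Rightarrow> 'a) ring" where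
  "Rn R n = \<lparr>carrier = {A. (\<forall>i<n. \<forall>j<n. A i j \<in> carrier R)
                          \<and> (\<forall>i j. \<not> (i < n \<and> j < n) \<longrightarrow> A i j = \<zero>\<^bsub>R\<^esub>)
                          \<and> (\<forall>i j. j < i \<longrightarrow> A i j = \<zero>\<^bsub>R\<^esub>)
                          \<and> (\<forall>i<n. A i i = A 0 0)},
     monoid.mult = (\<lambda>A B i j. if i < n \<and> j < n
                        then (\<Oplus>\<^bsub>R\<^esub> k\<in>{..<n}. A i k \<otimes>\<^bsub>R\<^esub> B k j) else \<zero>\<^bsub>R\<^esub>),
     monoid.one = (\<lambda>i j. if i < n \<and> j < n \<and> i = j then \<one>\<^bsub>R\<^esub> else \<zero>\<^bsub>R\<^esub>),
     ring.zero = (\<lambda>i j. \<zero>\<^bsub>R\<^esub>),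
     ring.add = (\<lambda>A B i j. if i < n \<and> j < n then A i j \<oplus>\<^bsub>R\<^esub> B i j else \<zero>\<^bsub>R\<^esub>)\<rparr>"

end

theory Submission
  imports Defs
begin


lemma (in ring) add_subgroup_intro:
  assumes "H \<subseteq> carrier R" "\<zero> \<in> H" "\<And>a. a \<in> H \<Longrightarrow> \<ominus> a \<in> H"
    "\<And>a b. a \<in> H \<Longrightarrow> b \<in> H \<Longrightarrow> a \<oplus> b \<in> H"
  shows "additive_subgroup H R"
  by (rule additive_subgroupI, rule add.subgroupI) (use assms in auto)

lemma (in ring) left_ideal_one:
  assumes "left_ideal M R" "\<one> \<in> M"
  shows "M = carrier R"
proof
  show "M \<subseteq> carrier R" using assms(1) additive_subgroup.a_subset unfolding left_ideal_def by blast
  show "carrier R \<subseteq> M"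
  proof
    fix x assume "x \<in> carrier R"
    then have "x \<otimes> \<one> \<in> M" using assms unfolding left_ideal_def by blast
    then show "x \<in> M" using \<open>x \<in> carrier R\<close> by simp
  qed
qed

lemma (in ring) geom_unit:
  assumes k: "k \<in> carrier R"
  shows "\<exists>u\<in>carrier R. u \<otimes> (\<one> \<ominus> k) = \<one> \<ominus> k [^] (m::nat)"
proof (induction m)
  case 0
  show ?case by (rule bexI[of _ \<zero>]) (use k in \<open>simp_all add: a_minus_def r_neg\<close>)
next
  case (Suc m)
  then obtain u where u: "u \<in> carrier R" "u \<otimes> (\<one> \<ominus> k) = \<one> \<ominus> k [^] m" by blast
  have "(\<one> \<oplus> k \<otimes> u) \<otimes> (\<one> \<ominus> k) = (\<one> \<ominus> k) \<oplus> k \<otimes> (u \<otimes> (\<one> \<ominus> k))"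
    using k u by (simp add: l_distr m_assoc)
  also have "\<dots> = (\<one> \<ominus> k) \<oplus> k \<otimes> (\<one> \<ominus> k [^] m)" using u by simp
  also have "\<dots> = (\<one> \<oplus> \<ominus> k) \<oplus> (k \<oplus> \<ominus> (k \<otimes> k [^] m))"
    using k by (simp add: a_minus_def r_distr r_minus del: nat_pow_Suc)
  also have "\<dots> = \<one> \<oplus> \<ominus> (k \<otimes> k [^] m)"
    using k by (simp add: a_assoc r_neg1 del: nat_pow_Suc)
  also have "\<dots> = \<one> \<ominus> k [^] Suc m"
    using k nat_pow_Suc2[OF k, of m] by (simp add: a_minus_def)
  finally show ?case using k u by (intro bexI[of _ "\<one> \<oplus> k \<otimes> u"]) auto
qed

lemma (in ring) nil_unit:
  assumes k: "k \<in> carrier R" and kn: "k [^] (N::nat) = \<zero>" and M: "left_ideal M R"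
    and m: "\<one> \<ominus> k \<in> M"
  shows "\<one> \<in> M"
proof -
  obtain u where u: "u \<in> carrier R" "u \<otimes> (\<one> \<ominus> k) = \<one> \<ominus> k [^] N" using geom_unit[OF k] by blast
  have "u \<otimes> (\<one> \<ominus> k) \<in> M" using M m u unfolding left_ideal_def by blast
  then show ?thesis using u kn by (simp add: a_minus_def)
qed

locale nilsurj = ring_hom_ring +
  assumes surj: "\<And>r. r \<in> carrier S \<Longrightarrow> \<exists>x\<in>carrier R. h x = r"
  and nil: "\<And>x. x \<in> carrier R \<Longrightarrow> h x = \<zero>\<^bsub>S\<^esub> \<Longrightarrow> \<exists>k::nat. x [^] k = \<zero>"
begin

lemma nil_iff:
  assumes x: "x \<in> carrier R"
  shows "x \<in> nilpotents R \<longleftrightarrow> h x \<in> nilpotents S"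
proof
  assume "x \<in> nilpotents R"
  then obtain k where "x [^] (k::nat) = \<zero>" unfolding nilpotents_def by blast
  then have "h x [^]\<^bsub>S\<^esub> k = \<zero>\<^bsub>S\<^esub>" using x hom_nat_pow[OF x, of k] by simp
  then show "h x \<in> nilpotents S" unfolding nilpotents_def using x by auto
next
  assume "h x \<in> nilpotents S"
  then obtain k where "h x [^]\<^bsub>S\<^esub> (k::nat) = \<zero>\<^bsub>S\<^esub>" unfolding nilpotents_def by blast
  then have "h (x [^] k) = \<zero>\<^bsub>S\<^esub>" using hom_nat_pow[OF x, of k] by simp
  then obtain j where "(x [^] k) [^] (j::nat) = \<zero>" using nil[of "x [^] k"] x by auto
  then have "x [^] (k * j) = \<zero>" using x by (simp add: R.nat_pow_pow)
  then show "x \<in> nilpotents R" unfolding nilpotents_def using x by blast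
qed

definition pre where "pre I = {x \<in> carrier R. h x \<in> I}"

lemma pre_left_ideal:
  assumes I: "left_ideal I S"
  shows "left_ideal (pre I) R" "\<And>x. x \<in> carrier R \<Longrightarrow> h x = \<zero>\<^bsub>S\<^esub> \<Longrightarrow> x \<in> pre I"
proof -
  have as: "additive_subgroup I S" and lm: "\<And>x a. x \<in> carrier S \<Longrightarrow> a \<in> I \<Longrightarrow> x \<otimes>\<^bsub>S\<^esub> a \<in> I"
    using I unfolding left_ideal_def by auto
  show "left_ideal (pre I) R"
    unfolding left_ideal_def
  proof (intro conjI ballI)
    show "additive_subgroup (pre I) R"
      by (rule R.add_subgroup_intro) (use as in \<open>auto simp: pre_def additive_subgroup.a_closed additive_subgroup.a_inv_closed additive_subgroup.zero_closed\<close>)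
    fix x a assume "x \<in> carrier R" "a \<in> pre I"
    then show "x \<otimes> a \<in> pre I" using lm by (auto simp: pre_def)
  qed
  fix x assume "x \<in> carrier R" "h x = \<zero>\<^bsub>S\<^esub>"
  then show "x \<in> pre I" using as by (auto simp: pre_def additive_subgroup.zero_closed)
qed

lemma img_left_ideal:
  assumes L: "left_ideal L R" and K: "\<And>x. x \<in> carrier R \<Longrightarrow> h x = \<zero>\<^bsub>S\<^esub> \<Longrightarrow> x \<in> L"
  shows "left_ideal (h ` L) S" "L = pre (h ` L)"
proof -
  have as: "additive_subgroup L R" and lm: "\<And>x a. x \<in> carrier R \<Longrightarrow> a \<in> L \<Longrightarrow> x \<otimes> a \<in> L"
    using L unfolding left_ideal_def by auto
  have sub: "L \<subseteq> carrier R" using as additive_subgroup.a_subset by blast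
  show "left_ideal (h ` L) S"
    unfolding left_ideal_def
  proof (intro conjI ballI)
    show "additive_subgroup (h ` L) S"
    proof (rule S.add_subgroup_intro)
      show "h ` L \<subseteq> carrier S" using sub by auto
      have "\<zero> \<in> L" using as additive_subgroup.zero_closed by blast
      then have "h \<zero> \<in> h ` L" by blast
      then show "\<zero>\<^bsub>S\<^esub> \<in> h ` L" by simp
      fix a b assume "a \<in> h ` L" "b \<in> h ` L"
      then obtain x y where xy: "x \<in> L" "y \<in> L" "a = h x" "b = h y" by blast
      have xc: "x \<in> carrier R" "y \<in> carrier R" using xy sub by auto
      then have "h (\<ominus> x) = \<ominus>\<^bsub>S\<^esub> a" "h (x \<oplus> y) = a \<oplus>\<^bsub>S\<^esub> b" using xy by auto
      moreover have "\<ominus> x \<in> L" "x \<oplus> y \<in> L" using xy as by (auto simp: additive_subgroup.a_closed additive_subgroup.a_inv_closed)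
      ultimately show "\<ominus>\<^bsub>S\<^esub> a \<in> h ` L" "a \<oplus>\<^bsub>S\<^esub> b \<in> h ` L" by (metis image_eqI)+
    qed
    fix r a assume "r \<in> carrier S" "a \<in> h ` L"
    then obtain s x where "s \<in> carrier R" "h s = r" "x \<in> L" "a = h x" using surj by blast
    then have "h (s \<otimes> x) = r \<otimes>\<^bsub>S\<^esub> a" "s \<otimes> x \<in> L" using sub lm by auto
    then show "r \<otimes>\<^bsub>S\<^esub> a \<in> h ` L" by (metis image_eqI)
  qed
  show "L = pre (h ` L)"
  proof
    show "L \<subseteq> pre (h ` L)" using sub by (auto simp: pre_def)
    show "pre (h ` L) \<subseteq> L"
    proof
      fix x assume "x \<in> pre (h ` L)"
      then obtain y where x: "x \<in> carrier R" and y: "y \<in> L" "h x = h y" by (auto simp: pre_def)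
      have yc: "y \<in> carrier R" using y sub by auto
      have "h (x \<oplus> \<ominus> y) = \<zero>\<^bsub>S\<^esub>" using x yc y by (simp add: S.r_neg)
      then have "x \<oplus> \<ominus> y \<in> L" using K x yc by simp
      then have "(x \<oplus> \<ominus> y) \<oplus> y \<in> L" using y as by (simp add: additive_subgroup.a_closed)
      moreover have "(x \<oplus> \<ominus> y) \<oplus> y = x" using x yc by (simp add: R.a_assoc R.l_neg)
      ultimately show "x \<in> L" by simp
    qed
  qed
qed

lemma max_contains_K:
  assumes M: "maximal_left_ideal M R" and x: "x \<in> carrier R" "h x = \<zero>\<^bsub>S\<^esub>"
  shows "x \<in> M"
proof (rule ccontr)
  assume xM: "x \<notin> M"
  have Ml: "left_ideal M R" and Mne: "M \<noteq> carrier R"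
    and Mmax: "\<And>J. left_ideal J R \<Longrightarrow> M \<subseteq> J \<Longrightarrow> J = M \<or> J = carrier R"
    using M unfolding maximal_left_ideal_def by auto
  have as: "additive_subgroup M R" and lm: "\<And>x a. x \<in> carrier R \<Longrightarrow> a \<in> M \<Longrightarrow> x \<otimes> a \<in> M"
    using Ml unfolding left_ideal_def by auto
  have sub: "M \<subseteq> carrier R" using as additive_subgroup.a_subset by blast
  define L where "L = {m \<oplus> k | m k. m \<in> M \<and> k \<in> carrier R \<and> h k = \<zero>\<^bsub>S\<^esub>}"
  have Ll: "left_ideal L R"
    unfolding left_ideal_def
  proof (intro conjI ballI)
    show "additive_subgroup L R"
    proof (rule R.add_subgroup_intro)
      show "L \<subseteq> carrier R" using sub by (auto simp: L_def)
      show "\<zero> \<in> L" unfolding L_def using as additive_subgroup.zero_closed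
        by (intro CollectI exI[of _ \<zero>]) auto
      fix a b assume "a \<in> L" "b \<in> L"
      then obtain m1 k1 m2 k2 where mk: "a = m1 \<oplus> k1" "m1 \<in> M" "k1 \<in> carrier R" "h k1 = \<zero>\<^bsub>S\<^esub>"
        "b = m2 \<oplus> k2" "m2 \<in> M" "k2 \<in> carrier R" "h k2 = \<zero>\<^bsub>S\<^esub>" unfolding L_def by blast
      have mc: "m1 \<in> carrier R" "m2 \<in> carrier R" using mk sub by auto
      have "\<ominus> a = \<ominus> m1 \<oplus> \<ominus> k1" using mk mc by (simp add: R.minus_add R.a_comm)
      moreover have "\<ominus> m1 \<in> M" using mk as by (simp add: additive_subgroup.a_inv_closed)
      moreover have "h (\<ominus> k1) = \<zero>\<^bsub>S\<^esub>" using mk by simp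
      ultimately show "\<ominus> a \<in> L" unfolding L_def using mk by blast
      have "a \<oplus> b = (m1 \<oplus> m2) \<oplus> (k1 \<oplus> k2)" using mk mc by (simp add: R.a_ac)
      moreover have "m1 \<oplus> m2 \<in> M" using mk as by (simp add: additive_subgroup.a_closed)
      moreover have "h (k1 \<oplus> k2) = \<zero>\<^bsub>S\<^esub>" using mk by simp
      ultimately show "a \<oplus> b \<in> L" unfolding L_def using mk by blast
    qed
    fix r a assume r: "r \<in> carrier R" and "a \<in> L"
    then obtain m k where mk: "a = m \<oplus> k" "m \<in> M" "k \<in> carrier R" "h k = \<zero>\<^bsub>S\<^esub>" unfolding L_def by blast
    have "r \<otimes> a = r \<otimes> m \<oplus> r \<otimes> k" using mk sub r by (simp add: R.r_distr subsetD)
    moreover have "r \<otimes> m \<in> M" using lm r mk by blast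
    moreover have "h (r \<otimes> k) = \<zero>\<^bsub>S\<^esub>" using mk r by simp
    moreover have "r \<otimes> k \<in> carrier R" using mk r by simp
    ultimately show "r \<otimes> a \<in> L" unfolding L_def by blast
  qed
  have "M \<subseteq> L"
  proof
    fix m assume "m \<in> M"
    then have "m = m \<oplus> \<zero> \<and> m \<in> M \<and> \<zero> \<in> carrier R \<and> h \<zero> = \<zero>\<^bsub>S\<^esub>" using sub by auto
    then show "m \<in> L" unfolding L_def by blast
  qed
  moreover have "x \<in> L" unfolding L_def using x as additive_subgroup.zero_closed
    by (intro CollectI exI[of _ \<zero>] exI[of _ x]) auto
  ultimately have "L = carrier R" using Mmax[OF Ll] xM by blast
  then have "\<one> \<in> L" by simp
  then obtain m k where mk: "\<one> = m \<oplus> k" "m \<in> M" "k \<in> carrier R" "h k = \<zero>\<^bsub>S\<^esub>"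
    unfolding L_def by blast
  have mc: "m \<in> carrier R" using mk sub by auto
  have "\<one> \<ominus> k = m" using mk mc by (simp add: a_minus_def R.a_assoc R.r_neg)
  then have "\<one> \<ominus> k \<in> M" using mk by simp
  moreover obtain N where "k [^] (N::nat) = \<zero>" using nil mk by blast
  ultimately have "\<one> \<in> M" using R.nil_unit[OF mk(3) _ Ml] by blast
  then show False using R.left_ideal_one[OF Ml] Mne by blast
qed

lemma max_img:
  assumes M: "maximal_left_ideal M R"
  shows "maximal_left_ideal (h ` M) S" "M = pre (h ` M)"
proof -
  have Ml: "left_ideal M R" and Mne: "M \<noteq> carrier R"
    and Mmax: "\<And>J. left_ideal J R \<Longrightarrow> M \<subseteq> J \<Longrightarrow> J = M \<or> J = carrier R"
    using M unfolding maximal_left_ideal_def by auto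
  note K = max_contains_K[OF M]
  note il = img_left_ideal[OF Ml K]
  show eq: "M = pre (h ` M)" by (rule il(2))
  show "maximal_left_ideal (h ` M) S"
    unfolding maximal_left_ideal_def
  proof (intro conjI allI impI)
    show "left_ideal (h ` M) S" by (rule il(1))
    show "h ` M \<noteq> carrier S"
    proof
      assume "h ` M = carrier S"
      then have "\<one> \<in> pre (h ` M)" by (simp add: pre_def)
      then show False using eq R.left_ideal_one[OF Ml] Mne by simp
    qed
    fix J assume J: "left_ideal J S \<and> h ` M \<subseteq> J"
    then have Jl: "left_ideal J S" and MJ: "h ` M \<subseteq> J" by auto
    have Jsub: "J \<subseteq> carrier S" using Jl additive_subgroup.a_subset unfolding left_ideal_def by blast
    have "M \<subseteq> pre J" using MJ eq by (auto simp: pre_def)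
    then have "pre J = M \<or> pre J = carrier R" using Mmax pre_left_ideal(1)[OF Jl] by blast
    then show "J = h ` M \<or> J = carrier S"
    proof
      assume P: "pre J = M"
      have "J \<subseteq> h ` M"
      proof
        fix j assume "j \<in> J"
        then obtain x where "x \<in> carrier R" "h x = j" using surj Jsub by blast
        then have "x \<in> pre J" using \<open>j \<in> J\<close> by (simp add: pre_def)
        then show "j \<in> h ` M" using P \<open>h x = j\<close> by blast
      qed
      then show ?thesis using MJ by blast
    next
      assume P: "pre J = carrier R"
      have "carrier S \<subseteq> J"
      proof
        fix j assume "j \<in> carrier S"
        then obtain x where "x \<in> carrier R" "h x = j" using surj by blast
        then show "j \<in> J" using P by (auto simp: pre_def)
      qed
      then show ?thesis using Jsub by blast
    qed
  qed
qed

lemma max_pre: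
  assumes I: "maximal_left_ideal I S"
  shows "maximal_left_ideal (pre I) R"
proof -
  have Il: "left_ideal I S" and Ine: "I \<noteq> carrier S"
    and Imax: "\<And>J. left_ideal J S \<Longrightarrow> I \<subseteq> J \<Longrightarrow> J = I \<or> J = carrier S"
    using I unfolding maximal_left_ideal_def by auto
  have Isub: "I \<subseteq> carrier S" using Il additive_subgroup.a_subset unfolding left_ideal_def by blast
  show ?thesis
    unfolding maximal_left_ideal_def
  proof (intro conjI allI impI)
    show "left_ideal (pre I) R" by (rule pre_left_ideal(1)[OF Il])
    show "pre I \<noteq> carrier R"
    proof
      assume "pre I = carrier R"
      then have "\<one>\<^bsub>S\<^esub> \<in> I" using R.one_closed unfolding pre_def by force
      then show False using S.left_ideal_one[OF Il] Ine by blast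
    qed
    fix J assume J: "left_ideal J R \<and> pre I \<subseteq> J"
    then have Jl: "left_ideal J R" and IJ: "pre I \<subseteq> J" by auto
    have K: "\<And>x. x \<in> carrier R \<Longrightarrow> h x = \<zero>\<^bsub>S\<^esub> \<Longrightarrow> x \<in> J"
      using pre_left_ideal(2)[OF Il] IJ by blast
    note il = img_left_ideal[OF Jl K]
    have "I \<subseteq> h ` J"
    proof
      fix i assume "i \<in> I"
      then obtain x where "x \<in> carrier R" "h x = i" using surj Isub by blast
      then have "x \<in> J" using IJ \<open>i \<in> I\<close> by (auto simp: pre_def)
      then show "i \<in> h ` J" using \<open>h x = i\<close> by blast
    qed
    then have "h ` J = I \<or> h ` J = carrier S" using Imax il(1) by blast
    then show "J = pre I \<or> J = carrier R"
    proof
      assume "h ` J = I" then show ?thesis using il(2) by simp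
    next
      assume "h ` J = carrier S" then have "J = pre (carrier S)" using il(2) by simp
      then show ?thesis by (auto simp: pre_def)
    qed
  qed
qed

lemma jac_iff:
  assumes x: "x \<in> carrier R"
  shows "x \<in> jacobson_radical R \<longleftrightarrow> h x \<in> jacobson_radical S"
proof
  assume "x \<in> jacobson_radical R"
  then have xa: "\<And>M. maximal_left_ideal M R \<Longrightarrow> x \<in> M" unfolding jacobson_radical_def by blast
  have "h x \<in> I" if "maximal_left_ideal I S" for I
    using xa[OF max_pre[OF that]] by (simp add: pre_def)
  then show "h x \<in> jacobson_radical S" unfolding jacobson_radical_def using x by auto
next
  assume "h x \<in> jacobson_radical S"
  then have xa: "\<And>I. maximal_left_ideal I S \<Longrightarrow> h x \<in> I" unfolding jacobson_radical_def by blast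
  have "x \<in> M" if "maximal_left_ideal M R" for M
  proof -
    have "h x \<in> h ` M" using xa[OF max_img(1)[OF that]] .
    then have "x \<in> pre (h ` M)" using x by (simp add: pre_def)
    then show ?thesis using max_img(2)[OF that] by simp
  qed
  then show "x \<in> jacobson_radical R" unfolding jacobson_radical_def using x by auto
qed

lemma NJ_transfer: "NJ_symmetric R \<longleftrightarrow> NJ_symmetric S"
proof
  assume NJ: "NJ_symmetric R"
  show "NJ_symmetric S"
    unfolding NJ_symmetric_def
  proof (intro ballI impI)
    fix a b c assume abc: "a \<in> carrier S" "b \<in> carrier S" "c \<in> carrier S"
      and N: "a \<otimes>\<^bsub>S\<^esub> b \<otimes>\<^bsub>S\<^esub> c \<in> nilpotents S"
    obtain x where x: "x \<in> carrier R" "h x = a" using surj abc(1) by blast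
    obtain y where y: "y \<in> carrier R" "h y = b" using surj abc(2) by blast
    obtain z where z: "z \<in> carrier R" "h z = c" using surj abc(3) by blast
    note xyz = x(1) y(1) z(1) x(2) y(2) z(2)
    have "h (x \<otimes> y \<otimes> z) \<in> nilpotents S" using N xyz by simp
    then have "x \<otimes> y \<otimes> z \<in> nilpotents R" using nil_iff xyz by simp
    then have "y \<otimes> x \<otimes> z \<in> jacobson_radical R" using NJ xyz unfolding NJ_symmetric_def by blast
    then have "h (y \<otimes> x \<otimes> z) \<in> jacobson_radical S" using jac_iff xyz by simp
    then show "b \<otimes>\<^bsub>S\<^esub> a \<otimes>\<^bsub>S\<^esub> c \<in> jacobson_radical S" using xyz by simp
  qed
next
  assume NJ: "NJ_symmetric S"
  show "NJ_symmetric R"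
    unfolding NJ_symmetric_def
  proof (intro ballI impI)
    fix x y z assume xyz: "x \<in> carrier R" "y \<in> carrier R" "z \<in> carrier R"
      and N: "x \<otimes> y \<otimes> z \<in> nilpotents R"
    have "h (x \<otimes> y \<otimes> z) \<in> nilpotents S" using N nil_iff xyz by simp
    then have "h x \<otimes>\<^bsub>S\<^esub> h y \<otimes>\<^bsub>S\<^esub> h z \<in> nilpotents S" using xyz by simp
    then have "h y \<otimes>\<^bsub>S\<^esub> h x \<otimes>\<^bsub>S\<^esub> h z \<in> jacobson_radical S"
      using NJ xyz unfolding NJ_symmetric_def by simp
    then have "h (y \<otimes> x \<otimes> z) \<in> jacobson_radical S" using xyz by simp
    then show "y \<otimes> x \<otimes> z \<in> jacobson_radical R" using jac_iff xyz by simp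
  qed
qed

end


locale rn = ring R for R (structure) + fixes n :: nat assumes n_pos: "0 < n"
begin

abbreviation S where "S \<equiv> Rn R n"

lemma Rn_carrier_eq: "carrier S = {A. (\<forall>i<n. \<forall>j<n. A i j \<in> carrier R)
                          \<and> (\<forall>i j. \<not> (i < n \<and> j < n) \<longrightarrow> A i j = \<zero>)
                          \<and> (\<forall>i j. j < i \<longrightarrow> A i j = \<zero>)
                          \<and> (\<forall>i<n. A i i = A 0 0)}"
  by (simp add: Rn_def)

lemma Rn_carrierD:
  assumes "A \<in> carrier S"
  shows "A i j \<in> carrier R" "\<not> (i < n \<and> j < n) \<Longrightarrow> A i j = \<zero>"
    "j < i \<Longrightarrow> A i j = \<zero>" "i < n \<Longrightarrow> A i i = A 0 0"
proof -
  have h: "(\<forall>i<n. \<forall>j<n. A i j \<in> carrier R)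
                          \<and> (\<forall>i j. \<not> (i < n \<and> j < n) \<longrightarrow> A i j = \<zero>)
                          \<and> (\<forall>i j. j < i \<longrightarrow> A i j = \<zero>)
                          \<and> (\<forall>i<n. A i i = A 0 0)" using assms unfolding Rn_carrier_eq by blast
  show "A i j \<in> carrier R"
  proof (cases "i < n \<and> j < n")
    case True then show ?thesis using h by blast
  next
    case False then have "A i j = \<zero>" using h by blast
    then show ?thesis by simp
  qed
  show "\<not> (i < n \<and> j < n) \<Longrightarrow> A i j = \<zero>" using h by blast
  show "j < i \<Longrightarrow> A i j = \<zero>" using h by blast
  show "i < n \<Longrightarrow> A i i = A 0 0" using h by blast
qed

lemma Rn_carrierI:
  assumes "\<And>i j. A i j \<in> carrier R" "\<And>i j. \<not> (i < n \<and> j < n) \<Longrightarrow> A i j = \<zero>"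
    "\<And>i j. j < i \<Longrightarrow> A i j = \<zero>" "\<And>i. i < n \<Longrightarrow> A i i = A 0 0"
  shows "A \<in> carrier S"
  unfolding Rn_carrier_eq using assms by blast

lemma Rn_add:
  assumes "A \<in> carrier S" "B \<in> carrier S"
  shows "A \<oplus>\<^bsub>S\<^esub> B = (\<lambda>i j. A i j \<oplus> B i j)"
  using Rn_carrierD(1-3)[OF assms(1)] Rn_carrierD(1-3)[OF assms(2)] by (auto simp: Rn_def fun_eq_iff)

lemma Rn_zero: "\<zero>\<^bsub>S\<^esub> = (\<lambda>i j. \<zero>)" by (simp add: Rn_def)
lemma Rn_one: "\<one>\<^bsub>S\<^esub> = (\<lambda>i j. if i < n \<and> j < n \<and> i = j then \<one> else \<zero>)" by (simp add: Rn_def)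

lemma Rn_mult:
  assumes "A \<in> carrier S" "B \<in> carrier S"
  shows "A \<otimes>\<^bsub>S\<^esub> B = (\<lambda>i j. \<Oplus>k\<in>{..<n}. A i k \<otimes> B k j)"
proof (rule ext, rule ext)
  fix i j
  show "(A \<otimes>\<^bsub>S\<^esub> B) i j = (\<Oplus>k\<in>{..<n}. A i k \<otimes> B k j)"
  proof (cases "i < n \<and> j < n")
    case True then show ?thesis by (simp add: Rn_def)
  next
    case False
    have "(\<Oplus>k\<in>{..<n}. A i k \<otimes> B k j) = (\<Oplus>k\<in>{..<n}. \<zero>)"
      apply (rule finsum_cong')
      using False Rn_carrierD(1-3)[OF assms(1)] Rn_carrierD(1-3)[OF assms(2)] by auto
    then show ?thesis using False by (simp add: Rn_def)
  qed
qed

lemma sum_zero_terms: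
  assumes "\<And>k. k < n \<Longrightarrow> f k = \<zero>"
  shows "(\<Oplus>k\<in>{..<n}. f k) = \<zero>"
proof -
  have "(\<Oplus>k\<in>{..<n}. f k) = (\<Oplus>k\<in>{..<n}. \<zero>)"
    by (rule finsum_cong') (use assms in auto)
  then show ?thesis by simp
qed

lemma sum_single_term:
  assumes "i < n" "\<And>k. k < n \<Longrightarrow> k \<noteq> i \<Longrightarrow> f k = \<zero>" "f i \<in> carrier R"
  shows "(\<Oplus>k\<in>{..<n}. f k) = f i"
proof -
  have fc: "f k \<in> carrier R" if "k < n" for k using assms that by (cases "k = i") auto
  have "(\<Oplus>k\<in>{..<n}. f k) = (\<Oplus>k\<in>{..<n}. if i = k then f k else \<zero>)"
    by (rule finsum_cong') (use assms fc in auto)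
  also have "\<dots> = f i"
    by (rule finsum_singleton) (use assms fc in auto)
  finally show ?thesis .
qed

lemma sum_swap:
  assumes "\<And>k l. f k l \<in> carrier R" "finite B"
  shows "finite A \<Longrightarrow> (\<Oplus>k\<in>A. \<Oplus>l\<in>B. f k l) = (\<Oplus>l\<in>B. \<Oplus>k\<in>A. f k l)"
proof (induction A rule: finite_induct)
  case empty then show ?case using assms by (simp add: finsum_zero)
next
  case (insert x F)
  have "(\<Oplus>k\<in>insert x F. \<Oplus>l\<in>B. f k l) = (\<Oplus>l\<in>B. f x l) \<oplus> (\<Oplus>k\<in>F. \<Oplus>l\<in>B. f k l)"
    using insert assms by (simp add: finsum_insert Pi_def)
  also have "\<dots> = (\<Oplus>l\<in>B. f x l) \<oplus> (\<Oplus>l\<in>B. \<Oplus>k\<in>F. f k l)" using insert by simp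
  also have "\<dots> = (\<Oplus>l\<in>B. f x l \<oplus> (\<Oplus>k\<in>F. f k l))"
    using assms insert by (simp add: finsum_addf Pi_def)
  also have "\<dots> = (\<Oplus>l\<in>B. \<Oplus>k\<in>insert x F. f k l)"
    by (rule finsum_cong') (use insert assms in \<open>auto simp: finsum_insert Pi_def\<close>)
  finally show ?case .
qed

lemma Rn_mult_closed:
  assumes A: "A \<in> carrier S" and B: "B \<in> carrier S"
  shows "A \<otimes>\<^bsub>S\<^esub> B \<in> carrier S"
  unfolding Rn_mult[OF A B]
proof (rule Rn_carrierI)
  note a = Rn_carrierD(1-3)[OF A] and b = Rn_carrierD(1-3)[OF B]
  fix i j
  show "(\<Oplus>k\<in>{..<n}. A i k \<otimes> B k j) \<in> carrier R"
    using a b by (simp add: Pi_def)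
  show "\<not> (i < n \<and> j < n) \<Longrightarrow> (\<Oplus>k\<in>{..<n}. A i k \<otimes> B k j) = \<zero>"
    by (rule sum_zero_terms) (use a b in auto)
  show "j < i \<Longrightarrow> (\<Oplus>k\<in>{..<n}. A i k \<otimes> B k j) = \<zero>"
  proof (rule sum_zero_terms)
    fix k assume "j < i" "k < n"
    show "A i k \<otimes> B k j = \<zero>"
    proof (cases "k < i")
      case True then show ?thesis using b(1)[of k j] a(3)[of k i] by simp
    next
      case False then show ?thesis using b(3)[of j k] a(1)[of i k] \<open>j < i\<close> by simp
    qed
  qed
next
  note a = Rn_carrierD(1-3)[OF A] and b = Rn_carrierD(1-3)[OF B]
  have d: "(\<Oplus>k\<in>{..<n}. A i k \<otimes> B k i) = A i i \<otimes> B i i" if "i < n" for i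
    by (rule sum_single_term) (use a b that in \<open>auto simp: neq_iff\<close>)
  fix i assume "i < n"
  then show "(\<Oplus>k\<in>{..<n}. A i k \<otimes> B k i) = (\<Oplus>k\<in>{..<n}. A 0 k \<otimes> B k 0)"
    using d[of i] d[of 0] n_pos Rn_carrierD(4)[OF A, of i] Rn_carrierD(4)[OF B, of i] by simp
qed

lemma Rn_mult00:
  assumes A: "A \<in> carrier S" and B: "B \<in> carrier S"
  shows "(A \<otimes>\<^bsub>S\<^esub> B) 0 0 = A 0 0 \<otimes> B 0 0"
  unfolding Rn_mult[OF A B]
  by (rule sum_single_term) (use Rn_carrierD(1-3)[OF A] Rn_carrierD(1-3)[OF B] n_pos in auto)


lemma Rn_zero_closed: "\<zero>\<^bsub>S\<^esub> \<in> carrier S"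
  unfolding Rn_zero by (rule Rn_carrierI) auto

lemma Rn_one_closed: "\<one>\<^bsub>S\<^esub> \<in> carrier S"
  unfolding Rn_one by (rule Rn_carrierI) (auto simp: n_pos)

lemma Rn_add_closed:
  assumes A: "A \<in> carrier S" and B: "B \<in> carrier S"
  shows "A \<oplus>\<^bsub>S\<^esub> B \<in> carrier S"
  unfolding Rn_add[OF A B]
proof (rule Rn_carrierI)
  note a = Rn_carrierD(1-3)[OF A] and b = Rn_carrierD(1-3)[OF B]
  fix i j
  show "A i j \<oplus> B i j \<in> carrier R" using a b by simp
  show "\<not> (i < n \<and> j < n) \<Longrightarrow> A i j \<oplus> B i j = \<zero>" using a b by simp
  show "j < i \<Longrightarrow> A i j \<oplus> B i j = \<zero>" using a b by simp
next
  fix i assume "i < n"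
  then show "A i i \<oplus> B i i = A 0 0 \<oplus> B 0 0"
    using Rn_carrierD(4)[OF A, of i] Rn_carrierD(4)[OF B, of i] by simp
qed

lemma Rn_neg:
  assumes A: "A \<in> carrier S"
  shows "\<exists>Y\<in>carrier S. Y \<oplus>\<^bsub>S\<^esub> A = \<zero>\<^bsub>S\<^esub>"
proof
  note a = Rn_carrierD(1-3)[OF A]
  show Y: "(\<lambda>i j. \<ominus> A i j) \<in> carrier S"
  proof (rule Rn_carrierI)
    fix i j
    show "\<ominus> A i j \<in> carrier R" using a by simp
    show "\<not> (i < n \<and> j < n) \<Longrightarrow> \<ominus> A i j = \<zero>" using a by simp
    show "j < i \<Longrightarrow> \<ominus> A i j = \<zero>" using a by simp
  next
    fix i assume "i < n"
    then show "\<ominus> A i i = \<ominus> A 0 0" using Rn_carrierD(4)[OF A, of i] by simp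
  qed
  show "(\<lambda>i j. \<ominus> A i j) \<oplus>\<^bsub>S\<^esub> A = \<zero>\<^bsub>S\<^esub>"
    unfolding Rn_add[OF Y A] Rn_zero using a by (simp add: l_neg)
qed

lemma Rn_l_one:
  assumes A: "A \<in> carrier S"
  shows "\<one>\<^bsub>S\<^esub> \<otimes>\<^bsub>S\<^esub> A = A"
proof (rule ext, rule ext)
  note a = Rn_carrierD(1-3)[OF A]
  fix i j
  show "(\<one>\<^bsub>S\<^esub> \<otimes>\<^bsub>S\<^esub> A) i j = A i j"
    unfolding Rn_mult[OF Rn_one_closed A]
  proof (cases "i < n")
    case True
    show "(\<Oplus>k\<in>{..<n}. \<one>\<^bsub>S\<^esub> i k \<otimes> A k j) = A i j"
      by (subst sum_single_term[OF True]) (use a True in \<open>auto simp: Rn_one\<close>)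
  next
    case False
    show "(\<Oplus>k\<in>{..<n}. \<one>\<^bsub>S\<^esub> i k \<otimes> A k j) = A i j"
      by (subst sum_zero_terms) (use a False in \<open>auto simp: Rn_one\<close>)
  qed
qed

lemma Rn_r_one:
  assumes A: "A \<in> carrier S"
  shows "A \<otimes>\<^bsub>S\<^esub> \<one>\<^bsub>S\<^esub> = A"
proof (rule ext, rule ext)
  note a = Rn_carrierD(1-3)[OF A]
  fix i j
  show "(A \<otimes>\<^bsub>S\<^esub> \<one>\<^bsub>S\<^esub>) i j = A i j"
    unfolding Rn_mult[OF A Rn_one_closed]
  proof (cases "j < n")
    case True
    show "(\<Oplus>k\<in>{..<n}. A i k \<otimes> \<one>\<^bsub>S\<^esub> k j) = A i j"
      by (subst sum_single_term[OF True]) (use a True in \<open>auto simp: Rn_one\<close>)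
  next
    case False
    show "(\<Oplus>k\<in>{..<n}. A i k \<otimes> \<one>\<^bsub>S\<^esub> k j) = A i j"
      by (subst sum_zero_terms) (use a False in \<open>auto simp: Rn_one\<close>)
  qed
qed

lemma Rn_assoc:
  assumes A: "A \<in> carrier S" and B: "B \<in> carrier S" and C: "C \<in> carrier S"
  shows "(A \<otimes>\<^bsub>S\<^esub> B) \<otimes>\<^bsub>S\<^esub> C = A \<otimes>\<^bsub>S\<^esub> (B \<otimes>\<^bsub>S\<^esub> C)"
proof (rule ext, rule ext)
  note a = Rn_carrierD(1)[OF A] and b = Rn_carrierD(1)[OF B] and c = Rn_carrierD(1)[OF C]
  fix i j
  have "((A \<otimes>\<^bsub>S\<^esub> B) \<otimes>\<^bsub>S\<^esub> C) i j = (\<Oplus>k\<in>{..<n}. (\<Oplus>l\<in>{..<n}. A i l \<otimes> B l k) \<otimes> C k j)"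
    unfolding Rn_mult[OF Rn_mult_closed[OF A B] C] unfolding Rn_mult[OF A B] ..
  also have "\<dots> = (\<Oplus>k\<in>{..<n}. \<Oplus>l\<in>{..<n}. A i l \<otimes> B l k \<otimes> C k j)"
    by (rule finsum_cong') (use a b c in \<open>auto simp: finsum_ldistr Pi_def\<close>)
  also have "\<dots> = (\<Oplus>l\<in>{..<n}. \<Oplus>k\<in>{..<n}. A i l \<otimes> B l k \<otimes> C k j)"
    by (rule sum_swap) (use a b c in auto)
  also have "\<dots> = (\<Oplus>l\<in>{..<n}. A i l \<otimes> (\<Oplus>k\<in>{..<n}. B l k \<otimes> C k j))"
    by (rule finsum_cong') (use a b c in \<open>auto simp: finsum_rdistr Pi_def m_assoc\<close>)
  also have "\<dots> = (A \<otimes>\<^bsub>S\<^esub> (B \<otimes>\<^bsub>S\<^esub> C)) i j"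
    unfolding Rn_mult[OF A Rn_mult_closed[OF B C]] unfolding Rn_mult[OF B C] ..
  finally show "((A \<otimes>\<^bsub>S\<^esub> B) \<otimes>\<^bsub>S\<^esub> C) i j = (A \<otimes>\<^bsub>S\<^esub> (B \<otimes>\<^bsub>S\<^esub> C)) i j" .
qed

lemma Rn_l_distr:
  assumes A: "A \<in> carrier S" and B: "B \<in> carrier S" and C: "C \<in> carrier S"
  shows "(A \<oplus>\<^bsub>S\<^esub> B) \<otimes>\<^bsub>S\<^esub> C = A \<otimes>\<^bsub>S\<^esub> C \<oplus>\<^bsub>S\<^esub> B \<otimes>\<^bsub>S\<^esub> C"
proof -
  note a = Rn_carrierD(1)[OF A] and b = Rn_carrierD(1)[OF B] and c = Rn_carrierD(1)[OF C]
  show ?thesis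
    unfolding Rn_mult[OF Rn_add_closed[OF A B] C] Rn_add[OF Rn_mult_closed[OF A C] Rn_mult_closed[OF B C]]
      unfolding Rn_mult[OF A C] Rn_mult[OF B C] Rn_add[OF A B]
    using a b c by (simp add: l_distr finsum_addf Pi_def)
qed

lemma Rn_r_distr:
  assumes A: "A \<in> carrier S" and B: "B \<in> carrier S" and C: "C \<in> carrier S"
  shows "C \<otimes>\<^bsub>S\<^esub> (A \<oplus>\<^bsub>S\<^esub> B) = C \<otimes>\<^bsub>S\<^esub> A \<oplus>\<^bsub>S\<^esub> C \<otimes>\<^bsub>S\<^esub> B"
proof -
  note a = Rn_carrierD(1)[OF A] and b = Rn_carrierD(1)[OF B] and c = Rn_carrierD(1)[OF C]
  show ?thesis
    unfolding Rn_mult[OF C Rn_add_closed[OF A B]] Rn_add[OF Rn_mult_closed[OF C A] Rn_mult_closed[OF C B]]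
      unfolding Rn_mult[OF C A] Rn_mult[OF C B] Rn_add[OF A B]
    using a b c by (simp add: r_distr finsum_addf Pi_def)
qed

lemma Rn_ring: "ring S"
proof (rule ringI)
  show "abelian_group S"
  proof (rule abelian_groupI)
    fix x y z assume x: "x \<in> carrier S" and y: "y \<in> carrier S" and z: "z \<in> carrier S"
    note a = Rn_carrierD(1)[OF x] and b = Rn_carrierD(1)[OF y] and c = Rn_carrierD(1)[OF z]
    show "x \<oplus>\<^bsub>S\<^esub> y \<oplus>\<^bsub>S\<^esub> z = x \<oplus>\<^bsub>S\<^esub> (y \<oplus>\<^bsub>S\<^esub> z)"
      unfolding Rn_add[OF Rn_add_closed[OF x y] z] Rn_add[OF x Rn_add_closed[OF y z]] unfolding Rn_add[OF x y] Rn_add[OF y z]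
      using a b c by (simp add: a_assoc)
  next
    fix x y assume x: "x \<in> carrier S" and y: "y \<in> carrier S"
    note a = Rn_carrierD(1)[OF x] and b = Rn_carrierD(1)[OF y]
    show "x \<oplus>\<^bsub>S\<^esub> y = y \<oplus>\<^bsub>S\<^esub> x"
      unfolding Rn_add[OF x y] Rn_add[OF y x] using a b by (simp add: a_comm)
  next
    fix x assume x: "x \<in> carrier S"
    note a = Rn_carrierD(1)[OF x]
    show "\<zero>\<^bsub>S\<^esub> \<oplus>\<^bsub>S\<^esub> x = x"
      unfolding Rn_add[OF Rn_zero_closed x] using a by (simp add: Rn_zero)
  qed (auto intro: Rn_add_closed Rn_zero_closed Rn_neg)
  show "monoid S"
    by (rule monoidI) (auto intro: Rn_mult_closed Rn_one_closed Rn_assoc Rn_l_one Rn_r_one)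
qed (auto intro: Rn_l_distr Rn_r_distr)

end


context rn begin

lemma pi_hom: "(\<lambda>A. A 0 0) \<in> ring_hom S R"
proof (rule ring_hom_memI)
  fix x y assume x: "x \<in> carrier S" and y: "y \<in> carrier S"
  show "(x \<otimes>\<^bsub>S\<^esub> y) 0 0 = x 0 0 \<otimes> y 0 0" by (rule Rn_mult00[OF x y])
  show "(x \<oplus>\<^bsub>S\<^esub> y) 0 0 = x 0 0 \<oplus> y 0 0" by (simp add: Rn_add[OF x y])
next
  fix x assume "x \<in> carrier S" then show "x 0 0 \<in> carrier R" by (rule Rn_carrierD(1))
qed (simp add: Rn_one n_pos)

lemma pi_surj:
  assumes r: "r \<in> carrier R"
  shows "\<exists>A\<in>carrier S. A 0 0 = r"
proof
  show "(\<lambda>i j. if i < n \<and> j < n \<and> i = j then r else \<zero>) \<in> carrier S"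
    by (rule Rn_carrierI) (use r n_pos in auto)
qed (simp add: n_pos)

lemma pow_strict:
  assumes A: "A \<in> carrier S" and A0: "A 0 0 = \<zero>"
  shows "\<And>i j. j < i + m \<Longrightarrow> (A [^]\<^bsub>S\<^esub> (m::nat)) i j = \<zero>"
proof (induction m)
  case 0
  then show ?case by (simp add: Rn_one)
next
  case (Suc m)
  interpret Sr: ring S by (rule Rn_ring)
  have P: "A [^]\<^bsub>S\<^esub> m \<in> carrier S" using A by simp
  have "(A [^]\<^bsub>S\<^esub> Suc m) i j = (\<Oplus>k\<in>{..<n}. (A [^]\<^bsub>S\<^esub> m) i k \<otimes> A k j)"
    by (simp add: Rn_mult[OF P A])
  also have "\<dots> = \<zero>"
  proof (rule sum_zero_terms)
    fix k assume k: "k < n"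
    show "(A [^]\<^bsub>S\<^esub> m) i k \<otimes> A k j = \<zero>"
    proof (cases "k < i + m")
      case True
      then show ?thesis using Suc.IH[of k i] Rn_carrierD(1)[OF A] by simp
    next
      case False
      then have "j \<le> k" using Suc.prems by simp
      then have "A k j = \<zero>"
      proof (cases "j < k")
        case True then show ?thesis using Rn_carrierD(3)[OF A] by simp
      next
        case False then have "j = k" using \<open>j \<le> k\<close> by simp
        then show ?thesis using Rn_carrierD(4)[OF A k] A0 by simp
      qed
      then show ?thesis using Rn_carrierD(1)[OF P] by simp
    qed
  qed
  finally show ?case .
qed

lemma pi_nil:
  assumes A: "A \<in> carrier S" and A0: "A 0 0 = \<zero>"
  shows "A [^]\<^bsub>S\<^esub> n = \<zero>\<^bsub>S\<^esub>"
proof -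
  interpret Sr: ring S by (rule Rn_ring)
  have P: "A [^]\<^bsub>S\<^esub> n \<in> carrier S" using A by simp
  show ?thesis
  proof (rule ext, rule ext)
    fix i j
    show "(A [^]\<^bsub>S\<^esub> n) i j = \<zero>\<^bsub>S\<^esub> i j"
    proof (cases "i < n \<and> j < n")
      case True
      then show ?thesis using pow_strict[OF A A0, of j i n] by (simp add: Rn_zero)
    next
      case False
      then show ?thesis using Rn_carrierD(2)[OF P] by (simp add: Rn_zero)
    qed
  qed
qed

lemma nilsurj_pi: "nilsurj S R (\<lambda>A. A 0 0)"
proof (rule nilsurj.intro)
  show "ring_hom_ring S R (\<lambda>A. A 0 0)"
    by (rule ring_hom_ringI2[OF Rn_ring ring_axioms pi_hom])
  show "nilsurj_axioms S R (\<lambda>A. A 0 0)"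
    by (rule nilsurj_axioms.intro) (use pi_surj pi_nil in blast)+
qed

end

theorem proposition2p25:
  fixes R :: "('a, 'b) ring_scheme" and n :: nat
  assumes "ring R" and "n \<ge> 1"
  shows "NJ_symmetric R \<longleftrightarrow> NJ_symmetric (Rn R n)"
proof -
  interpret rn R n by (rule rn.intro[OF assms(1)]) (rule rn_axioms.intro, use assms(2) in simp)
  show ?thesis using nilsurj.NJ_transfer[OF nilsurj_pi] by simp
qed

end
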